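(* For every fixed positive integer $n_0$, all sufficiently large superabundant numbers are multiples of $n_0$; that is, only finitely many superabundant numbers are not divisible by $n_0$.
   Context: For a positive integer $n$, $\sigma(n)=\sum_{d\mid n} d$. A positive integer $s$ is superabundant if $\sigma(n)/n<\sigma(s)/s$ for all integers $0<n<s$. *)

theory Defs
  imports Complex_Main "HOL-Computational_Algebra.Primes"
begin

definition sigma :: "nat \<Rightarrow> nat" where
  "sigma n = (\<Sum>d | d dvd n. d)"

definition superabundant :: "nat \<Rightarrow> bool" where
  "superabundant s \<longleftrightarrow> s > 0 \<and>
     (\<forall>n. 0 < n \<and> n < s \<longrightarrow> real (sigma n) / real n < real (sigma s) / real s)"

end

theory Submission
  imports Defs
begin

lemma sigma_mult:
  fixes m n :: nat
  assumes "coprime m n" "m > 0" "n > 0"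
  shows "sigma (m * n) = sigma m * sigma n"
proof -
  let ?A = "{d. d dvd m}" and ?B = "{d. d dvd n}"
  have fA: "finite ?A" and fB: "finite ?B" using assms by auto
  have "sigma m * sigma n = (\<Sum>a\<in>?A. \<Sum>b\<in>?B. a * b)"
    unfolding sigma_def by (simp add: sum_product)
  also have "\<dots> = (\<Sum>x\<in>?A \<times> ?B. fst x * snd x)"
    by (simp add: sum.cartesian_product case_prod_beta)
  also have "\<dots> = (\<Sum>y\<in>(\<lambda>x. fst x * snd x) ` (?A \<times> ?B). y)"
  proof (rule sum.reindex[symmetric, unfolded comp_def])
    show "inj_on (\<lambda>x. fst x * snd x) (?A \<times> ?B)"
    proof (rule inj_onI, clarsimp)
      fix a b a' b' assume h: "a dvd m" "b dvd n" "a' dvd m" "b' dvd n" "a * b = a' * b'"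
      have cb1: "coprime a b'" by (rule coprime_divisors[OF h(1) h(4) assms(1)])
      have cb2: "coprime a' b" by (rule coprime_divisors[OF h(3) h(2) assms(1)])
      have "a dvd a' * b'" using h(5) by (metis dvd_triv_left)
      hence "a dvd a'" using coprime_dvd_mult_left_iff[OF cb1] by simp
      moreover have "a' dvd a * b" using h(5) by (metis dvd_triv_left)
      hence "a' dvd a" using coprime_dvd_mult_left_iff[OF cb2] by simp
      ultimately have "a = a'" by (simp add: dvd_antisym)
      moreover have "a \<noteq> 0" using h(1) assms(2) by (auto simp: dvd_0_left_iff)
      hence "b = b'" using h(5) \<open>a = a'\<close> by simp
      ultimately show "a = a' \<and> b = b'" by simp
    qed
  qed
  also have "(\<lambda>x. fst x * snd x) ` (?A \<times> ?B) = {d. d dvd m * n}"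
  proof (rule set_eqI, rule iffI)
    fix d assume "d \<in> (\<lambda>x. fst x * snd x) ` (?A \<times> ?B)"
    then show "d \<in> {d. d dvd m * n}" by (auto intro: mult_dvd_mono)
  next
    fix d assume "d \<in> {d. d dvd m * n}"
    then obtain a b where "d = a * b" "a dvd m" "b dvd n" using division_decomp by blast
    then show "d \<in> (\<lambda>x. fst x * snd x) ` (?A \<times> ?B)" by force
  qed
  finally show ?thesis unfolding sigma_def by simp
qed

lemma sigma_primepow:
  fixes p :: nat
  assumes "prime p"
  shows "sigma (p ^ a) = (\<Sum>i\<le>a. p ^ i)"
proof -
  have "{d. d dvd p ^ a} = (\<lambda>i. p ^ i) ` {..a}"
    using divides_primepow_nat[OF assms] by auto
  moreover have "inj_on (\<lambda>i. p ^ i) {..a}"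
    using prime_gt_1_nat[OF assms] by (simp add: inj_on_def)
  ultimately show ?thesis unfolding sigma_def by (simp add: sum.reindex)
qed

lemma geo_split: "(\<Sum>i<m+n. (t::nat)^i) = (\<Sum>i<m. t^i) + t^m * (\<Sum>i<n. t^i)"
  by (induction n) (auto simp: power_add algebra_simps)

lemma geo_le: assumes "(t::nat) \<ge> 2" shows "(\<Sum>i<Suc n. t^i) \<le> 2 * t^n"
proof (induction n)
  case 0 then show ?case by simp
next
  case (Suc n)
  have "(\<Sum>i<Suc (Suc n). t^i) = (\<Sum>i<Suc n. t^i) + t^Suc n" by simp
  also have "\<dots> \<le> 2 * t^n + t^Suc n" using Suc by simp
  also have "2 * t^n \<le> t^Suc n" using assms by simp
  hence "2 * t^n + t^Suc n \<le> 2 * t^Suc n" by simp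
  finally show ?case .
qed

lemma key_ineq:
  fixes p r a e j k :: nat
  assumes p2: "p \<ge> 2" and r2: "r \<ge> 2" and j1: "1 \<le> j" and je: "j \<le> e"
    and rj: "r^(j-1) \<le> p" and ak: "a < k" and big: "2 * p^(k+2) \<le> r^e"
  shows "p * (\<Sum>i<Suc a. p^i) * (\<Sum>i<Suc e. r^i) \<le> (\<Sum>i<Suc (Suc a). p^i) * (\<Sum>i<Suc (e-j). r^i) * r^j"
proof -
  define Sp where "Sp = (\<Sum>i<Suc a. p^i)"
  define Sr where "Sr = (\<Sum>i<Suc (e-j). r^i)"
  define T where "T = (\<Sum>i<j. r^i)"
  have e1: "(\<Sum>i<Suc e. r^i) = T + r^j * Sr"
    unfolding T_def Sr_def using geo_split[where m=j and n="Suc (e-j)" and t=r] je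
    by (metis Suc_diff_le add_Suc_right le_add_diff_inverse)
  have e2: "(\<Sum>i<Suc (Suc a). p^i) = 1 + p * Sp"
    unfolding Sp_def using geo_split[where m=1 and n="Suc a" and t=p] by simp
  have "r^(e-j) \<le> Sr" unfolding Sr_def by simp
  hence "r^(e-j) * r^j \<le> Sr * r^j" by simp
  moreover have "r^(e-j) * r^j = r^e" using je by (simp flip: power_add)
  ultimately have A: "r^e \<le> Sr * r^j" by simp
  obtain j' where j': "j = Suc j'" using j1 by (cases j) auto
  have "T \<le> 2 * r^j'" unfolding T_def j' using geo_le[OF r2] by simp
  also have "\<dots> \<le> 2 * p" using rj j' by simp
  finally have B: "T \<le> 2 * p" .
  have C: "Sp \<le> 2 * p^a" unfolding Sp_def using geo_le[OF p2] by simp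
  have "p * Sp * T \<le> p * (2 * p^a) * (2 * p)" using B C by (intro mult_le_mono) auto
  also have "\<dots> = 2 * (2 * p^(a+2))" by (simp add: power_add power2_eq_square algebra_simps)
  also have "2 * p^(a+2) \<le> p * p^(a+2)" using p2 by simp
  also have "p * p^(a+2) = p^(a+3)" by (simp add: numeral_3_eq_3)
  also have "p^(a+3) \<le> p^(k+2)" using ak p2 by (intro power_increasing) auto
  finally have D: "p * Sp * T \<le> Sr * r^j" using big A by linarith
  have "p * Sp * (T + r^j * Sr) = p * Sp * T + p * Sp * Sr * r^j" by (simp add: algebra_simps)
  also have "\<dots> \<le> Sr * r^j + p * Sp * Sr * r^j" using D by simp
  also have "\<dots> = (1 + p * Sp) * Sr * r^j" by (simp add: algebra_simps)
  finally show ?thesis using e1 e2 unfolding Sp_def Sr_def by simp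
qed


lemma main_bound:
  fixes s p r k :: nat
  assumes SA: "superabundant s" and pp: "prime p" and ak: "multiplicity p s < k"
    and pr: "prime r" and rp: "r \<noteq> p"
  shows "r ^ multiplicity r s < 2 * p^(k+2)"
proof (rule ccontr)
  define e where "e = multiplicity r s"
  define a where "a = multiplicity p s"
  assume "\<not> r ^ multiplicity r s < 2 * p^(k+2)"
  hence big: "2 * p^(k+2) \<le> r^e" unfolding e_def by simp
  have s0: "s > 0" using SA unfolding superabundant_def by simp
  have p2: "p \<ge> 2" and r2: "r \<ge> 2" using pp pr prime_ge_2_nat by auto
  have nur: "\<not> is_unit r" and nup: "\<not> is_unit p" using pr pp by (auto simp: not_prime_unit)
  obtain y where y: "s = r^e * y" "\<not> r dvd y" unfolding e_def
    using multiplicity_decompose'[OF _ nur, of s] s0 by blast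
  have y0: "y \<noteq> 0" using y s0 by auto
  define a' where "a' = multiplicity p y"
  obtain m where m: "y = p^a' * m" "\<not> p dvd m" unfolding a'_def
    using multiplicity_decompose'[OF y0 nup] by blast
  have "\<not> p dvd r^e" using pp pr rp by (metis prime_dvd_power_nat primes_dvd_imp_eq)
  hence "\<not> p dvd r^e * m" using m(2) pp by (simp add: prime_dvd_mult_iff)
  moreover have "s = p^a' * (r^e * m)" using y m by (simp add: algebra_simps)
  ultimately have "multiplicity p s = a'" using pp by (intro multiplicity_decomposeI) auto
  hence aa: "a' = a" unfolding a_def by simp
  have sdec: "s = p^a * r^e * m" using y m aa by (simp add: algebra_simps)
  have m0: "m > 0" using s0 sdec by (auto intro: gr0I)
  have rm: "\<not> r dvd m" using y(2) m(1) by auto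
  have cpm: "coprime (p^b) m" for b using m(2) pp by (simp add: prime_imp_coprime)
  have crm: "coprime (r^b) m" for b using rm pr by (simp add: prime_imp_coprime)
  have cpr: "coprime (p^b) (r^c)" for b c using primes_coprime[OF pp pr rp[symmetric]] by simp
  have sig: "sigma (p^b * r^c * m) = (\<Sum>i\<le>b. p^i) * (\<Sum>i\<le>c. r^i) * sigma m" for b c
  proof -
    have "sigma (p^b * r^c * m) = sigma (p^b * r^c) * sigma m"
      using cpm crm m0 p2 r2 by (intro sigma_mult) auto
    also have "sigma (p^b * r^c) = sigma (p^b) * sigma (r^c)"
      using cpr p2 r2 by (intro sigma_mult) auto
    finally show ?thesis using sigma_primepow[OF pp] sigma_primepow[OF pr] by simp
  qed
  have "p^1 \<le> p^(k+2)" using p2 by (intro power_increasing) auto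
  hence "p \<le> p^(k+2)" by simp
  hence "p < r^e" using big p2 by linarith
  define j where "j = (LEAST j. p < r^j)"
  have pj: "p < r^j" unfolding j_def using \<open>p < r^e\<close> by (rule LeastI)
  have je: "j \<le> e" unfolding j_def using \<open>p < r^e\<close> by (rule Least_le)
  have j1: "1 \<le> j" using pj p2 by (cases j) auto
  have rj: "r^(j-1) \<le> p" using not_less_Least[of "j-1" "\<lambda>j. p < r^j"] j1 unfolding j_def[symmetric] by linarith
  define s' where "s' = p^(Suc a) * r^(e-j) * m"
  have s'0: "s' > 0" unfolding s'_def using m0 p2 r2 by simp
  have "s' * r^j = p * s" unfolding s'_def sdec using je
    by (simp add: algebra_simps flip: power_add)
  hence "s' * r^j < r^j * s" using pj s0 by simp
  hence s's: "s' < s" by (simp add: mult.commute)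
  have "real (sigma s') / real s' < real (sigma s) / real s"
    using SA s'0 s's unfolding superabundant_def by blast
  hence "real (sigma s') * real s < real (sigma s) * real s'"
    using s0 s'0 by (simp add: field_simps)
  hence lt: "sigma s' * s < sigma s * s'" by (simp flip: of_nat_mult)
  have K: "p * (\<Sum>i\<le>a. p^i) * (\<Sum>i\<le>e. r^i) \<le> (\<Sum>i\<le>Suc a. p^i) * (\<Sum>i\<le>e-j. r^i) * r^j"
    using key_ineq[OF p2 r2 j1 je rj _ big] ak unfolding a_def[symmetric]
    by (simp add: lessThan_Suc_atMost)
  have "sigma s * s' = (p * (\<Sum>i\<le>a. p^i) * (\<Sum>i\<le>e. r^i)) * (p^a * r^(e-j) * sigma m * m)"
    unfolding s'_def by (subst sdec, subst sig) (simp add: algebra_simps)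
  also have "\<dots> \<le> ((\<Sum>i\<le>Suc a. p^i) * (\<Sum>i\<le>e-j. r^i) * r^j) * (p^a * r^(e-j) * sigma m * m)"
    using K by (rule mult_right_mono) simp
  also have "\<dots> = sigma s' * s"
  proof -
    have ee: "r^e = r^j * r^(e-j)" using je by (simp flip: power_add)
    show ?thesis unfolding s'_def by (subst sdec, subst sig) (simp add: ee algebra_simps)
  qed
  finally show False using lt by simp
qed


lemma sa_bound:
  fixes s p k :: nat
  assumes SA: "superabundant s" and pp: "prime p" and ak: "multiplicity p s < k"
  shows "s \<le> (2 * p^(k+2)) ^ (2 * p^(k+2))"
proof -
  define B where "B = 2 * p^(k+2)"
  have s0: "s > 0" using SA unfolding superabundant_def by simp
  have p2: "p \<ge> 2" using pp prime_ge_2_nat by auto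
  have "p^k \<le> p^(k+2)" using p2 by (intro power_increasing) auto
  hence pkB: "p^k \<le> B" unfolding B_def by simp
  have fac: "q ^ multiplicity q s < B" if q: "q \<in> prime_factors s" for q
  proof (cases "q = p")
    case True
    have "p ^ multiplicity p s < p ^ k" using ak p2 by (intro power_strict_increasing) auto
    then show ?thesis using True pkB by simp
  next
    case False
    have "prime q" using q by auto
    then show ?thesis unfolding B_def using main_bound[OF SA pp ak _ False] by simp
  qed
  have sub: "prime_factors s \<subseteq> {..<B}"
  proof
    fix q assume q: "q \<in> prime_factors s"
    have "multiplicity q s \<ge> 1" using q s0 by (simp add: prime_factors_multiplicity)
    hence "q^1 \<le> q ^ multiplicity q s" using q by (intro power_increasing) (auto simp: in_prime_factors_iff dest: prime_gt_0_nat)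
    then show "q \<in> {..<B}" using fac[OF q] by simp
  qed
  hence cB: "card (prime_factors s) \<le> B" using card_mono[of "{..<B}"] by fastforce
  have sp: "s = (\<Prod>q\<in>prime_factors s. q ^ multiplicity q s)"
    using prime_factorization_nat[OF s0] .
  have B1: "B \<ge> 1" unfolding B_def using p2 by simp
  have "(\<Prod>q\<in>prime_factors s. q ^ multiplicity q s) \<le> B ^ B"
    by (rule prod_le_power[OF _ cB B1]) (use fac in \<open>auto intro: less_imp_le\<close>)
  then show ?thesis unfolding B_def[symmetric] using sp by simp
qed

theorem proposition1:
  fixes n0 :: nat
  assumes "n0 > 0"
  shows "finite {s. superabundant s \<and> \<not> n0 dvd s}"
proof -
  let ?b = "\<lambda>p. (2 * p^(multiplicity p n0+2)) ^ (2 * p^(multiplicity p n0+2))"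
  have "{s. superabundant s \<and> \<not> n0 dvd s} \<subseteq> (\<Union>p\<in>prime_factors n0. {..?b p})"
  proof
    fix s assume s: "s \<in> {s. superabundant s \<and> \<not> n0 dvd s}"
    hence SA: "superabundant s" and nd: "\<not> n0 dvd s" by auto
    obtain p where pp: "prime p" and lt: "multiplicity p s < multiplicity p n0"
    proof -
      have "\<not> (\<forall>p. prime p \<longrightarrow> multiplicity p n0 \<le> multiplicity p s)"
        using nd multiplicity_le_imp_dvd[of n0 s] assms by auto
      then show ?thesis using that by (auto simp: not_le)
    qed
    have "p dvd n0" using lt not_dvd_imp_multiplicity_0[of p n0] by (cases "p dvd n0") auto
    hence "p \<in> prime_factors n0" using pp assms by (simp add: in_prime_factors_iff)
    moreover have "s \<le> ?b p" using sa_bound[OF SA pp lt] .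
    ultimately show "s \<in> (\<Union>p\<in>prime_factors n0. {..?b p})" by auto
  qed
  moreover have "finite (\<Union>p\<in>prime_factors n0. {..?b p})" by simp
  ultimately show ?thesis by (rule finite_subset)
qed

end
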